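(* Assume $D\le\tfrac12$. Let $\pi^*$ be the naive AM strategy with $\pi^*_m=\dfrac{e_m-d_m}{1-D}$ for every $m\in\mathcal M$ (the strategy called Undefended). Then the M strategy $\rho^*$ with $\rho^*_m=1$ for all $m\in\mathcal M$ (always attack) is a best response of M to $\pi^*$, and $u_{AM}(\pi^*,\rho^* )=D$. Moreover $u_{AM}(\pi,\rho)\le D$ for every AM strategy $\pi$ and every M strategy $\rho$; hence $(\pi^*,\rho^* )$ is an AM-optimal equilibrium among all AM strategies, in which AM protects every machine it defends.
   Context: Let $\mathcal M$ be a finite nonempty set of machine (environment) types. Let $e\in[0,1]^{\mathcal M}$ with $\sum_{r\in\mathcal M}e_r=1$ ($e_r$ is the fraction of all real machines that are of type $r$), and $d\in[0,1]^{\mathcal M}$ with $0\le d_r\le e_r$ ($d_r$ is the fraction of all real machines that are of type $r$ and defended by the anti-malware AM); put $D=\sum_{r}d_r$. An AM strategy $\pi$ assigns to each real machine type $r\in\mathcal M$ a vector $\pi^r\in[0,1]^{\mathcal M}$ with $\sum_{m}\pi^r_m\le 1$ ($\pi^r_m$ is the probability that AM creates a sandbox of type $m$ on a defended real machine of type $r$; with probability $1-\sum_m\pi^r_m$ no sandbox is created). AM's strategy is naive if $\pi^r$ does not depend on $r$; then we write $\pi_m$ for $\pi^r_m$. A malware (M) strategy is a vector $\rho\in[0,1]^{\mathcal M}$ ($\rho_m$ is the probability M attacks when it perceives environment $m$). The utilities are $$u_M(\pi,\rho)=\sum_{r\in\mathcal M}\Big[(e_r-d_r)\rho_r+d_r\Big(1-\sum_{m\in\mathcal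 M}\pi^r_m\rho_m\Big)\rho_r\Big],$$ $$u_{AM}(\pi,\rho)=\sum_{r\in\mathcal M}d_r\Big[\sum_{m\in\mathcal M}\big(\pi^r_m\rho_m+\pi^r_m(1-\rho_m)(1-\rho_r)\big)+\Big(1-\sum_{m\in\mathcal M}\pi^r_m\Big)(1-\rho_r)\Big].$$ A best response of M to $\pi$ is any $\rho\in\arg\max_{\hat\rho\in[0,1]^{\mathcal M}}u_M(\pi,\hat\rho)$. A pair $(\pi,\rho)$ with $\rho$ a best response to $\pi$ is an equilibrium; it is AM-optimal within a class of AM strategies if $\pi$ lies in the class and $u_{AM}(\pi,\rho)\ge u_{AM}(\pi',\rho')$ for every equilibrium $(\pi',\rho')$ with $\pi'$ in the class. *)

theory Defs
  imports Complex_Main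
begin

text \<open>An AM strategy is pi :: 'm => 'm => real, with pi r m the probability of creating
  a sandbox of type m on a defended real machine of type r.\<close>

definition am_strategy :: "('m::finite \<Rightarrow> 'm \<Rightarrow> real) \<Rightarrow> bool" where
  "am_strategy \<pi> \<longleftrightarrow> (\<forall>r m. 0 \<le> \<pi> r m \<and> \<pi> r m \<le> 1) \<and> (\<forall>r. (\<Sum>m\<in>UNIV. \<pi> r m) \<le> 1)"

definition naive :: "('m::finite \<Rightarrow> 'm \<Rightarrow> real) \<Rightarrow> bool" where
  "naive \<pi> \<longleftrightarrow> (\<forall>r r'. \<pi> r = \<pi> r')"

definition m_strategy :: "('m::finite \<Rightarrow> real) \<Rightarrow> bool" where
  "m_strategy \<rho> \<longleftrightarrow> (\<forall>m. 0 \<le> \<rho> m \<and> \<rho> m \<le> 1)"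

definition u_M :: "('m::finite \<Rightarrow> real) \<Rightarrow> ('m \<Rightarrow> real) \<Rightarrow> ('m \<Rightarrow> 'm \<Rightarrow> real) \<Rightarrow> ('m \<Rightarrow> real) \<Rightarrow> real" where
  "u_M e d \<pi> \<rho> = (\<Sum>r\<in>UNIV. (e r - d r) * \<rho> r + d r * (1 - (\<Sum>m\<in>UNIV. \<pi> r m * \<rho> m)) * \<rho> r)"

definition u_AM :: "('m::finite \<Rightarrow> real) \<Rightarrow> ('m \<Rightarrow> 'm \<Rightarrow> real) \<Rightarrow> ('m \<Rightarrow> real) \<Rightarrow> real" where
  "u_AM d \<pi> \<rho> = (\<Sum>r\<in>UNIV. d r * ((\<Sum>m\<in>UNIV. \<pi> r m * \<rho> m + \<pi> r m * (1 - \<rho> m) * (1 - \<rho> r))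
                                     + (1 - (\<Sum>m\<in>UNIV. \<pi> r m)) * (1 - \<rho> r)))"

definition best_response :: "('m::finite \<Rightarrow> real) \<Rightarrow> ('m \<Rightarrow> real) \<Rightarrow> ('m \<Rightarrow> 'm \<Rightarrow> real) \<Rightarrow> ('m \<Rightarrow> real) \<Rightarrow> bool" where
  "best_response e d \<pi> \<rho> \<longleftrightarrow> m_strategy \<rho> \<and> (\<forall>\<rho>'. m_strategy \<rho>' \<longrightarrow> u_M e d \<pi> \<rho>' \<le> u_M e d \<pi> \<rho>)"

definition equilibrium :: "('m::finite \<Rightarrow> real) \<Rightarrow> ('m \<Rightarrow> real) \<Rightarrow> ('m \<Rightarrow> 'm \<Rightarrow> real) \<Rightarrow> ('m \<Rightarrow> real) \<Rightarrow> bool" where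
  "equilibrium e d \<pi> \<rho> \<longleftrightarrow> best_response e d \<pi> \<rho>"

definition am_optimal :: "(('m::finite \<Rightarrow> 'm \<Rightarrow> real) \<Rightarrow> bool) \<Rightarrow> ('m \<Rightarrow> real) \<Rightarrow> ('m \<Rightarrow> real) \<Rightarrow> ('m \<Rightarrow> 'm \<Rightarrow> real) \<Rightarrow> ('m \<Rightarrow> real) \<Rightarrow> bool" where
  "am_optimal C e d \<pi> \<rho> \<longleftrightarrow> equilibrium e d \<pi> \<rho> \<and> C \<pi> \<and>
     (\<forall>\<pi>' \<rho>'. C \<pi>' \<and> equilibrium e d \<pi>' \<rho>' \<longrightarrow> u_AM d \<pi>' \<rho>' \<le> u_AM d \<pi> \<rho>)"

end

theory Submission
  imports Defs
begin

lemma inner_le1: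
  fixes p :: "'m::finite \<Rightarrow> real" and \<rho> :: "'m \<Rightarrow> real"
  assumes p: "\<forall>m. 0 \<le> p m" "(\<Sum>m\<in>UNIV. p m) \<le> 1"
    and \<rho>: "m_strategy \<rho>"
  shows "(\<Sum>m\<in>UNIV. p m * \<rho> m + p m * (1 - \<rho> m) * (1 - \<rho> r))
          + (1 - (\<Sum>m\<in>UNIV. p m)) * (1 - \<rho> r) \<le> 1"
proof -
  have r: "0 \<le> \<rho> r" "\<rho> r \<le> 1" using \<rho> by (auto simp: m_strategy_def)
  have "(\<Sum>m\<in>UNIV. p m * \<rho> m + p m * (1 - \<rho> m) * (1 - \<rho> r)) \<le> (\<Sum>m\<in>UNIV. p m)"
  proof (rule sum_mono)
    fix m
    have "0 \<le> \<rho> m" "\<rho> m \<le> 1" using \<rho> by (auto simp: m_strategy_def)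
    moreover have "0 \<le> p m" using p by auto
    ultimately have "p m * (1 - \<rho> m) * (1 - \<rho> r) \<le> p m * (1 - \<rho> m)"
      using r by (intro mult_left_le) auto
    thus "p m * \<rho> m + p m * (1 - \<rho> m) * (1 - \<rho> r) \<le> p m" by (simp add: algebra_simps)
  qed
  moreover have "(1 - (\<Sum>m\<in>UNIV. p m)) * (1 - \<rho> r) \<le> 1 - (\<Sum>m\<in>UNIV. p m)"
    using p r by (intro mult_left_le) auto
  ultimately show ?thesis by linarith
qed

lemma uAM_bound:
  assumes d: "\<forall>r. 0 \<le> (d::'m::finite \<Rightarrow> real) r" and "am_strategy \<pi>" and "m_strategy \<rho>"
  shows "u_AM d \<pi> \<rho> \<le> (\<Sum>r\<in>UNIV. d r)"
  unfolding u_AM_def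
proof (rule sum_mono)
  fix r
  have "(\<Sum>m\<in>UNIV. \<pi> r m * \<rho> m + \<pi> r m * (1 - \<rho> m) * (1 - \<rho> r))
          + (1 - (\<Sum>m\<in>UNIV. \<pi> r m)) * (1 - \<rho> r) \<le> 1"
    using assms by (intro inner_le1) (auto simp: am_strategy_def)
  thus "d r * ((\<Sum>m\<in>UNIV. \<pi> r m * \<rho> m + \<pi> r m * (1 - \<rho> m) * (1 - \<rho> r))
          + (1 - (\<Sum>m\<in>UNIV. \<pi> r m)) * (1 - \<rho> r)) \<le> d r"
    using d mult_left_le by blast
qed

theorem theorem3:
  fixes e d :: "'m::finite \<Rightarrow> real"
  assumes e_range: "\<forall>r. 0 \<le> e r \<and> e r \<le> 1"
    and e_sum: "(\<Sum>r\<in>UNIV. e r) = 1"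
    and d_range: "\<forall>r. 0 \<le> d r \<and> d r \<le> e r"
    and D_le: "(\<Sum>r\<in>UNIV. d r) \<le> 1/2"
  defines "D \<equiv> (\<Sum>r\<in>UNIV. d r)"
    and "\<pi>s \<equiv> (\<lambda>(r::'m) m. (e m - d m) / (1 - (\<Sum>r\<in>UNIV. d r)))"
    and "\<rho>s \<equiv> (\<lambda>(m::'m). 1::real)"
  shows "am_strategy \<pi>s \<and> naive \<pi>s
    \<and> best_response e d \<pi>s \<rho>s
    \<and> u_AM d \<pi>s \<rho>s = D
    \<and> (\<forall>\<pi> \<rho>. am_strategy \<pi> \<and> m_strategy \<rho> \<longrightarrow> u_AM d \<pi> \<rho> \<le> D)
    \<and> am_optimal am_strategy e d \<pi>s \<rho>s"
proof -
  have Dpos: "1 - D > 0" using D_le D_def by simp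
  have ed_sum: "(\<Sum>m\<in>UNIV. e m - d m) = 1 - D"
    using e_sum D_def by (simp add: sum_subtractf)
  have pis: "\<pi>s = (\<lambda>r m. (e m - d m) / (1 - D))" using \<pi>s_def D_def by simp
  have psum: "(\<Sum>m\<in>UNIV. \<pi>s r m) = 1" for r
    using Dpos ed_sum by (simp add: pis flip: sum_divide_distrib)
  have edle: "e m - d m \<le> 1 - D" for m
  proof -
    have "e m - d m \<le> (\<Sum>m\<in>UNIV. e m - d m)"
      using d_range by (intro member_le_sum) auto
    thus ?thesis using ed_sum by simp
  qed
  have am: "am_strategy \<pi>s"
    unfolding am_strategy_def using psum d_range edle Dpos by (auto simp: pis)
  have nv: "naive \<pi>s" by (simp add: naive_def pis)
  have ms: "m_strategy \<rho>s" by (simp add: m_strategy_def \<rho>s_def)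
  have uAMs: "u_AM d \<pi>s \<rho>s = D"
    by (simp add: u_AM_def \<rho>s_def psum D_def)
  have uMs: "u_M e d \<pi>s \<rho>s = 1 - D"
    by (simp add: u_M_def \<rho>s_def psum ed_sum)
  have br: "best_response e d \<pi>s \<rho>s"
    unfolding best_response_def
  proof (intro conjI ms allI impI)
    fix \<rho> :: "'m \<Rightarrow> real" assume r: "m_strategy \<rho>"
    have r0: "0 \<le> \<rho> m" "\<rho> m \<le> 1" for m using r by (auto simp: m_strategy_def)
    define S where "S = (\<Sum>m\<in>UNIV. \<pi>s undefined m * \<rho> m)"
    have Sr: "(\<Sum>m\<in>UNIV. \<pi>s r m * \<rho> m) = S" for r by (simp add: S_def pis)
    have S1: "(\<Sum>m\<in>UNIV. (e m - d m) * \<rho> m) = (1 - D) * S"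
      using Dpos by (simp add: S_def pis sum_distrib_left)
    have Sle: "S \<le> 1"
    proof -
      have "S \<le> (\<Sum>m\<in>UNIV. \<pi>s undefined m)" unfolding S_def
        using am r0 by (intro sum_mono mult_right_le_one_le) (auto simp: am_strategy_def)
      thus ?thesis using psum by simp
    qed
    have S0: "0 \<le> S" unfolding S_def
      using am r0 by (intro sum_nonneg mult_nonneg_nonneg) (auto simp: am_strategy_def)
    have dr: "(\<Sum>r\<in>UNIV. d r * \<rho> r) \<le> D"
      unfolding D_def using d_range r0 by (intro sum_mono mult_right_le_one_le) auto
    have "u_M e d \<pi>s \<rho> = (\<Sum>r\<in>UNIV. (e r - d r) * \<rho> r) + (\<Sum>r\<in>UNIV. d r * \<rho> r) * (1 - S)"
    proof -
      have "u_M e d \<pi>s \<rho> = (\<Sum>r\<in>UNIV. (e r - d r) * \<rho> r + d r * (1 - S) * \<rho> r)"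
        unfolding u_M_def Sr ..
      also have "\<dots> = (\<Sum>r\<in>UNIV. (e r - d r) * \<rho> r) + (\<Sum>r\<in>UNIV. d r * \<rho> r) * (1 - S)"
        by (simp add: sum.distrib sum_subtractf sum_distrib_left sum_distrib_right algebra_simps)
      finally show ?thesis .
    qed
    also have "\<dots> \<le> (1 - D) * S + D * (1 - S)"
      using S1 dr Sle by (simp add: mult_right_mono)
    also have "\<dots> \<le> (1 - D) * S + (1 - D) * (1 - S)"
      using D_le D_def Sle by (intro add_left_mono mult_right_mono) auto
    also have "\<dots> = 1 - D" by (simp add: algebra_simps)
    finally show "u_M e d \<pi>s \<rho> \<le> u_M e d \<pi>s \<rho>s" using uMs by simp
  qed
  have bound: "\<forall>\<pi> \<rho>. am_strategy \<pi> \<and> m_strategy \<rho> \<longrightarrow> u_AM d \<pi> \<rho> \<le> D"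
    using uAM_bound d_range D_def by blast
  have opt: "am_optimal am_strategy e d \<pi>s \<rho>s"
    unfolding am_optimal_def equilibrium_def
    using br am bound uAMs by (auto simp: best_response_def)
  show ?thesis using am nv br uAMs bound opt by blast
qed

end
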